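(* Let $\{x^k\}_k$, $\{z^k\}_k$ be generated by the normal map-based stochastic proximal gradient method described in the context. Then for all integers $0\le m<n$ (and every sample, with the right-hand side interpreted as $+\infty$ when $L=\infty$), \[ \psi(x^n)-\psi(x^m)\le\Big(\frac{L}{2}-\frac1\lambda\Big)\|x^n-x^m\|^2+\langle F^\lambda_{\mathrm{nor}}(z^m),x^n-x^m\rangle+\frac1\lambda\langle z^n-z^m,x^n-x^m\rangle. \]
   Context: Let $\varphi:\mathbb{R}^d\to(-\infty,\infty]$ be convex, lower semicontinuous and proper, let $f:\mathbb{R}^d\to\mathbb{R}$ be continuously differentiable on an open set containing $\mathrm{dom}\,\varphi$, and set $\psi=f+\varphi$. For $\lambda>0$ let $\mathrm{prox}_{\lambda\varphi}(x)=\operatorname{argmin}_y\{\varphi(y)+\frac{1}{2\lambda}\|x-y\|^2\}$, $\mathrm{env}_{\lambda\varphi}$ the Moreau envelope with $\nabla\mathrm{env}_{\lambda\varphi}(x)=(x-\mathrm{prox}_{\lambda\varphi}(x))/\lambda$, and the normal map $F^\lambda_{\mathrm{nor}}(z)=\nabla f(\mathrm{prox}_{\lambda\varphi}(z))+\frac1\lambda(z-\mathrm{prox}_{\lambda\varphi}(z))$. Method: on a filtered probability space $(\Omega,\mathcal F,\{\mathcal F_k\}_k,\mathbb P)$, with $\lambda>0$, step sizes $\alpha_k>0$, deterministic $z^0$, $x^0=\mathrm{prox}_{\lambda\varphi}(z^0)$, and $\mathcal F_{k+1}$-measurable random vectors $g^k$, set $z^{k+1}=z^k-\alpha_k(g^k+\nabla\mathrm{env}_{\lambda\varphi}(z^k))$,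 $x^{k+1}=\mathrm{prox}_{\lambda\varphi}(z^{k+1})$. $L(\omega)=\sup_{\bar x\in\mathrm{cl}(\mathrm{conv}\{x^k(\omega)\}_k)}\mathrm{lip}\,\nabla f(\bar x)$, where $\mathrm{lip}\,\nabla f(\bar x)=\limsup_{x,x'\to\bar x,\,x\ne x'}\|\nabla f(x)-\nabla f(x')\|/\|x-x'\|$. *)

theory Defs
  imports "HOL-Analysis.Analysis" "HOL-Probability.Probability"
begin

definition edom :: "('a \<Rightarrow> ereal) \<Rightarrow> 'a set" where
  "edom \<phi> = {x. \<phi> x < \<infinity>}"

definition proper_fun :: "('a \<Rightarrow> ereal) \<Rightarrow> bool" where
  "proper_fun \<phi> \<longleftrightarrow> (\<forall>x. \<phi> x \<noteq> -\<infinity>) \<and> (\<exists>x. \<phi> x < \<infinity>)"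

definition ereal_convex :: "('a::real_vector \<Rightarrow> ereal) \<Rightarrow> bool" where
  "ereal_convex \<phi> \<longleftrightarrow> (\<forall>x y t. 0 < t \<and> t < 1 \<longrightarrow>
      \<phi> ((1 - t) *\<^sub>R x + t *\<^sub>R y) \<le> ereal (1 - t) * \<phi> x + ereal t * \<phi> y)"

definition lsc_fun :: "('a::topological_space \<Rightarrow> ereal) \<Rightarrow> bool" where
  "lsc_fun \<phi> \<longleftrightarrow> (\<forall>x. \<phi> x \<le> Liminf (at x) \<phi>)"

text \<open>Proximal operator: the (unique, for convex lsc proper phi) minimiser.\<close>
definition prox :: "real \<Rightarrow> ('a::real_normed_vector \<Rightarrow> ereal) \<Rightarrow> 'a \<Rightarrow> 'a" where
  "prox lam \<phi> x = (THE y. \<forall>y'. \<phi> y + ereal (norm (x - y)^2 / (2 * lam))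
                              \<le> \<phi> y' + ereal (norm (x - y')^2 / (2 * lam)))"

text \<open>Gradient of the Moreau envelope, via the standard formula.\<close>
definition grad_env :: "real \<Rightarrow> ('a::real_normed_vector \<Rightarrow> ereal) \<Rightarrow> 'a \<Rightarrow> 'a" where
  "grad_env lam \<phi> x = (1 / lam) *\<^sub>R (x - prox lam \<phi> x)"

definition F_nor :: "real \<Rightarrow> ('a \<Rightarrow> 'a) \<Rightarrow> ('a::real_normed_vector \<Rightarrow> ereal) \<Rightarrow> 'a \<Rightarrow> 'a" where
  "F_nor lam gf \<phi> z = gf (prox lam \<phi> z) + (1 / lam) *\<^sub>R (z - prox lam \<phi> z)"

definition lip :: "('a::real_normed_vector \<Rightarrow> 'b::real_normed_vector) \<Rightarrow> 'a \<Rightarrow> ereal" where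
  "lip G xb = Limsup (at (xb, xb) within {p. fst p \<noteq> snd p})
      (\<lambda>p. ereal (norm (G (fst p) - G (snd p)) / norm (fst p - snd p)))"

end

theory Submission
  imports Defs
begin


lemma quad_lb:
  fixes r a C lam B n :: real
  assumes "lam > 0" "C \<ge> 0" "r \<ge> 0" "a \<ge> 0" "n \<ge> r - a" "n \<ge> 0"
  shows "B - C * a - C^2 * lam / 2 \<le> B - C * r + n^2 / (2 * lam)"
proof (cases "r \<le> a")
  case True
  then have "C * r \<le> C * a" using assms by (simp add: mult_left_mono)
  moreover have "0 \<le> C^2 * lam / 2" "0 \<le> n^2 / (2 * lam)" using assms by auto
  ultimately show ?thesis by linarith
next
  case False
  define s where "s = r - a"
  have s: "s > 0" "n \<ge> s" using False assms by (auto simp: s_def)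
  have "s^2 \<le> n^2" using s by (simp add: power_mono)
  have "0 \<le> (s - lam * C)^2" by simp
  then have "0 \<le> s^2 - 2 * lam * C * s + lam^2 * C^2" by (simp add: power2_eq_square algebra_simps)
  then have "-(C^2 * lam / 2) \<le> s^2 / (2 * lam) - C * s" using assms(1)
    by (simp add: field_simps power2_eq_square)
  moreover have "s^2 / (2 * lam) \<le> n^2 / (2 * lam)" using \<open>s^2 \<le> n^2\<close> assms(1)
    by (simp add: divide_right_mono)
  ultimately show ?thesis unfolding s_def by (simp add: algebra_simps)
qed

lemma quad_bound:
  fixes r a C lam B n M :: real
  assumes "lam > 0" "C \<ge> 0" "r \<ge> 0" "a \<ge> 0" "n \<ge> r - a" "n \<ge> 0"
    and "B - C * r + n^2 / (2 * lam) \<le> M"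
  shows "r \<le> a + 4 * lam * C + 4 * lam * \<bar>M - B + C * a\<bar> + 1"
proof (cases "r \<le> a + 4 * lam * C")
  case True
  have "0 \<le> 4 * lam * \<bar>M - B + C * a\<bar>" using assms(1) by simp
  then show ?thesis using True by linarith
next
  case False
  define s where "s = r - a"
  define D where "D = M - B + C * a"
  have "0 \<le> 4 * lam * C" using assms(1,2) by simp
  then have s: "s > 4 * lam * C" "n \<ge> s" "s > 0" using False assms
    unfolding s_def by linarith+
  have "s^2 \<le> n^2" using s by (simp add: power_mono)
  then have "s^2 / (2 * lam) \<le> n^2 / (2 * lam)" using assms(1) by (simp add: divide_right_mono)
  then have "s^2 / (2 * lam) - C * s \<le> D" using assms(7) unfolding D_def s_def by (simp add: algebra_simps)
  moreover have "C * s \<le> s^2 / (4 * lam)"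
  proof -
    have "(4 * lam * C) * s \<le> s * s" using s by (intro mult_right_mono) auto
    then have "C * s * (4 * lam) \<le> s * s" by (simp add: algebra_simps)
    then show ?thesis using assms(1) by (simp add: field_simps power2_eq_square)
  qed
  ultimately have "s^2 / (4 * lam) \<le> D" by (simp add: field_simps)
  then have "s^2 \<le> 4 * lam * D" using assms(1) by (simp add: field_simps)
  moreover have "s \<le> 1 + s^2"
  proof (cases "s \<le> 1")
    case False
    then have "s * 1 \<le> s * s" using s(3) by (intro mult_left_mono) auto
    then show ?thesis by (simp add: power2_eq_square)
  qed (simp add: add_increasing2)
  moreover have "4 * lam * D \<le> 4 * lam * \<bar>D\<bar>" using assms(1) by simp
  ultimately show ?thesis unfolding s_def D_def using assms \<open>0 \<le> 4 * lam * C\<close> by linarith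
qed

lemma small_t_limit:
  fixes A Bv c :: real
  assumes c: "c \<ge> 0" and H: "\<And>t. 0 < t \<Longrightarrow> t < 1 \<Longrightarrow> A \<le> Bv + t * c"
  shows "A \<le> Bv"
proof (rule ccontr)
  assume "\<not> A \<le> Bv"
  then have d: "A - Bv > 0" by simp
  define t where "t = min (1/2) ((A - Bv) / (2 * (c + 1)))"
  have t: "0 < t" "t < 1" using d c by (auto simp: t_def)
  have "t \<le> (A - Bv) / (2 * (c + 1))" by (simp add: t_def)
  then have "t * c \<le> (A - Bv) / (2 * (c + 1)) * c" using c by (rule mult_right_mono)
  also have "\<dots> < A - Bv"
  proof -
    have "(A - Bv) * c < (A - Bv) * (2 * (c + 1))" using d c by (intro mult_strict_left_mono) auto
    then show ?thesis using c by (simp add: divide_less_eq)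
  qed
  finally show False using H[OF t] by simp
qed

context
  fixes \<phi> :: "'a::euclidean_space \<Rightarrow> ereal"
  assumes conv: "ereal_convex \<phi>" and lsc: "lsc_fun \<phi>" and proper: "proper_fun \<phi>"
begin

lemma not_minf: "\<phi> x \<noteq> -\<infinity>"
  using proper unfolding proper_fun_def by auto

lemma lsc_ball:
  assumes "c < \<phi> x" shows "\<exists>\<delta>>0. \<forall>y\<in>ball x \<delta>. c < \<phi> y"
proof -
  have "c < Liminf (at x) \<phi>" using assms lsc unfolding lsc_fun_def by (meson order_less_le_trans)
  then have "eventually (\<lambda>y. c < \<phi> y) (at x)" by (rule less_LiminfD)
  then obtain d where d: "d > 0" "\<And>y. y \<noteq> x \<and> dist y x < d \<Longrightarrow> c < \<phi> y"
    unfolding eventually_at by auto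
  show ?thesis
    using d assms by (metis dist_commute mem_ball)
qed

lemma lsc_seq:
  assumes "s \<longlonglongrightarrow> x" "c < \<phi> x" shows "eventually (\<lambda>k. c < \<phi> (s k)) sequentially"
proof -
  obtain \<delta> where d: "\<delta> > 0" "\<forall>y\<in>ball x \<delta>. c < \<phi> y" using lsc_ball assms(2) by blast
  have "eventually (\<lambda>k. dist (s k) x < \<delta>) sequentially"
    using assms(1) d(1) by (simp add: tendsto_iff)
  then show ?thesis
    by eventually_elim (use d in \<open>auto simp: dist_commute\<close>)
qed

lemma bounded_below_compact:
  assumes "compact K" shows "\<exists>B. \<forall>y\<in>K. ereal B < \<phi> y"
proof -
  define c where "c w = (if \<phi> w = \<infinity> then 0 else real_of_ereal (\<phi> w) - 1)" for w
  have cw: "ereal (c w) < \<phi> w" for w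
    using not_minf[of w] by (cases "\<phi> w") (auto simp: c_def)
  have "\<forall>w. \<exists>\<delta>>0. \<forall>y\<in>ball w \<delta>. ereal (c w) < \<phi> y" using lsc_ball cw by blast
  then obtain \<delta> where d: "\<And>w. \<delta> w > 0" "\<And>w y. y \<in> ball w (\<delta> w) \<Longrightarrow> ereal (c w) < \<phi> y"
    by metis
  have "K \<subseteq> \<Union>((\<lambda>w. ball w (\<delta> w)) ` K)" using d(1) by force
  then obtain T where T: "T \<subseteq> K" "finite T" "K \<subseteq> \<Union>((\<lambda>w. ball w (\<delta> w)) ` T)"
    using compactE_image[OF assms, of K "\<lambda>w. ball w (\<delta> w)"] by auto
  show ?thesis
  proof (intro exI ballI)
    fix y assume "y \<in> K"
    then obtain w where w: "w \<in> T" "y \<in> ball w (\<delta> w)" using T by auto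
    have "- (\<Sum>w\<in>T. \<bar>c w\<bar>) \<le> c w"
      using member_le_sum[of w T "\<lambda>w. \<bar>c w\<bar>"] w T by auto
    then show "ereal (- (\<Sum>w\<in>T. \<bar>c w\<bar>)) < \<phi> y"
      using d(2)[OF w(2)] by (meson ereal_less_eq(3) order_le_less_trans)
  qed
qed

lemma minorant:
  assumes y0: "\<phi> y0 < \<infinity>"
  shows "\<exists>B C. C \<ge> 0 \<and> (\<forall>y. ereal (B - C * norm (y - y0)) \<le> \<phi> y)"
proof -
  obtain B1 where B1: "\<forall>y\<in>cball y0 1. ereal B1 < \<phi> y"
    using bounded_below_compact[of "cball y0 1"] by auto
  define p0 where "p0 = real_of_ereal (\<phi> y0)"
  have p0: "\<phi> y0 = ereal p0" using y0 not_minf[of y0] unfolding p0_def by (cases "\<phi> y0") auto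
  have "B1 < p0" using B1[rule_format, of y0] p0 by auto
  define C where "C = p0 - B1"
  have C: "C \<ge> 0" using \<open>B1 < p0\<close> C_def by auto
  show ?thesis
  proof (intro exI conjI allI)
    show "C \<ge> 0" by fact
    fix y
    define r where "r = norm (y - y0)"
    show "ereal (B1 - C * norm (y - y0)) \<le> \<phi> y"
    proof (cases "r \<le> 1")
      case True
      then have "ereal B1 < \<phi> y" using B1 by (simp add: r_def dist_norm norm_minus_commute)
      moreover have "B1 - C * norm (y - y0) \<le> B1" using C by simp
      ultimately show ?thesis by (meson ereal_less_eq(3) order_trans less_imp_le)
    next
      case False
      define t where "t = 1 / r"
      have t: "0 < t" "t < 1" using False by (auto simp: t_def)
      define w where "w = (1 - t) *\<^sub>R y0 + t *\<^sub>R y"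
      have "w - y0 = t *\<^sub>R (y - y0)" by (simp add: w_def algebra_simps)
      then have "norm (w - y0) = 1" using False t by (simp add: t_def r_def)
      then have "ereal B1 < \<phi> w" using B1 by (simp add: dist_norm norm_minus_commute)
      also have "\<phi> w \<le> ereal (1 - t) * \<phi> y0 + ereal t * \<phi> y"
        using conv t unfolding ereal_convex_def w_def by blast
      finally have *: "ereal B1 < ereal (1 - t) * ereal p0 + ereal t * \<phi> y" using p0 by simp
      show ?thesis
      proof (cases "\<phi> y")
        case (real py)
        with * have "B1 < (1 - t) * p0 + t * py" by simp
        then have "r * B1 < r * ((1 - t) * p0 + t * py)" using False by simp
        also have "r * ((1 - t) * p0 + t * py) = (r - 1) * p0 + py" using False
          by (simp add: t_def algebra_simps)
        finally have "B1 - C * r \<le> py" using False \<open>B1 < p0\<close> unfolding C_def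
          by (simp add: algebra_simps)
        then show ?thesis using real r_def by simp
      qed (use not_minf in auto)
    qed
  qed
qed

lemma prox_exists:
  assumes lam: "lam > 0"
  shows "\<exists>p. \<forall>y'. \<phi> p + ereal (norm (z - p)^2 / (2 * lam)) \<le> \<phi> y' + ereal (norm (z - y')^2 / (2 * lam))"
proof -
  obtain y0 where y0: "\<phi> y0 < \<infinity>" using proper unfolding proper_fun_def by auto
  obtain B C where BC: "C \<ge> 0" "\<And>y. ereal (B - C * norm (y - y0)) \<le> \<phi> y"
    using minorant[OF y0] by auto
  define q where "q y = norm (z - y)^2 / (2 * lam)" for y
  define h where "h y = \<phi> y + ereal (q y)" for y
  define a where "a = norm (z - y0)"
  have tri: "norm (y - y0) - a \<le> norm (z - y)" for y
    unfolding a_def by (metis norm_diff_triangle_le norm_minus_commute add.commute diff_le_eq order_refl)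
  have hlow: "ereal (B - C * norm (y - y0) + q y) \<le> h y" for y
    unfolding h_def using BC(2)[of y] by (metis add_right_mono plus_ereal.simps(1))
  define LB where "LB = B - C * a - C^2 * lam / 2"
  have LB: "ereal LB \<le> h y" for y
  proof -
    have "LB \<le> B - C * norm (y - y0) + q y"
      unfolding LB_def q_def by (rule quad_lb) (use lam BC(1) tri[of y] in \<open>auto simp: a_def\<close>)
    then show ?thesis using hlow[of y] by (meson ereal_less_eq(3) order_trans)
  qed
  define m where "m = (INF y. h y)"
  have "ereal LB \<le> m" unfolding m_def using LB by (simp add: le_INF_iff)
  moreover have "m \<le> h y0" unfolding m_def by (rule INF_lower) simp
  moreover have "h y0 < \<infinity>" using y0 unfolding h_def by simp
  ultimately obtain mr where mr: "m = ereal mr" by (cases m) auto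
  have "\<forall>k::nat. \<exists>y. h y < ereal (mr + 1 / (real k + 1))"
  proof
    fix k :: nat
    have "m < ereal (mr + 1 / (real k + 1))" using mr by simp
    then show "\<exists>y. h y < ereal (mr + 1 / (real k + 1))" unfolding m_def by (simp add: INF_less_iff)
  qed
  then obtain s where s: "\<And>k. h (s k) < ereal (mr + 1 / (real k + 1))" by metis
  define R where "R = a + 4 * lam * C + 4 * lam * \<bar>(mr + 1) - B + C * a\<bar> + 1"
  have sR: "norm (s k - y0) \<le> R" for k
  proof -
    have "1 / (real k + 1) \<le> 1" by (simp add: field_simps)
    then have "ereal (mr + 1 / (real k + 1)) \<le> ereal (mr + 1)" by simp
    then have "ereal (B - C * norm (s k - y0) + q (s k)) < ereal (mr + 1)"
      using hlow[of "s k"] s[of k] by (meson order_le_less_trans order_less_le_trans)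
    then have "B - C * norm (s k - y0) + norm (z - s k)^2 / (2 * lam) \<le> mr + 1"
      unfolding q_def by simp
    then show ?thesis unfolding R_def
      by (rule quad_bound[rotated -1]) (use lam BC(1) tri[of "s k"] in \<open>auto simp: a_def\<close>)
  qed
  have "bounded (range s)"
    unfolding bounded_def by (rule exI[of _ y0], rule exI[of _ R]) (use sR in \<open>auto simp: dist_norm norm_minus_commute\<close>)
  then obtain l r where lr: "strict_mono r" "(s \<circ> r) \<longlonglongrightarrow> l"
    using bounded_imp_convergent_subsequence by blast
  have "h l \<le> m"
  proof (rule ccontr)
    assume "\<not> h l \<le> m"
    then have "m < h l" by simp
    then obtain c where c: "m < ereal c" "ereal c < h l" using ereal_dense2 by blast
    have ev1: "eventually (\<lambda>k. h (s (r k)) < ereal c) sequentially"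
    proof -
      have "c - mr > 0" using c mr by simp
      have "(\<lambda>k. mr + 1 / (real (r k) + 1)) \<longlonglongrightarrow> mr + 0"
      proof (intro tendsto_intros)
        have "(\<lambda>k. 1 / (real k + 1)) \<longlonglongrightarrow> (0::real)" using LIMSEQ_inverse_real_of_nat by (simp add: inverse_eq_divide add.commute)
        then show "(\<lambda>k. 1 / (real (r k) + 1)) \<longlonglongrightarrow> 0"
          using LIMSEQ_subseq_LIMSEQ[OF _ lr(1)] unfolding o_def by blast
      qed
      then have "eventually (\<lambda>k. mr + 1 / (real (r k) + 1) < c) sequentially"
        using c mr by (intro order_tendstoD(2)) auto
      then show ?thesis
        by eventually_elim (use s in \<open>meson ereal_less_eq(3) less_imp_le order_less_le_trans\<close>)
    qed
    have ev2: "eventually (\<lambda>k. ereal c < h (s (r k))) sequentially"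
    proof -
      have "ereal (c - q l) < \<phi> l"
        using c(2) not_minf[of l] unfolding h_def by (cases "\<phi> l") auto
      then obtain c2 where c2: "ereal (c - q l) < ereal c2" "ereal c2 < \<phi> l" using ereal_dense2 by blast
      have e1: "eventually (\<lambda>k. ereal c2 < \<phi> ((s \<circ> r) k)) sequentially"
        by (rule lsc_seq[OF lr(2) c2(2)])
      have "(\<lambda>k. q ((s \<circ> r) k)) \<longlonglongrightarrow> q l"
        unfolding q_def using lam lr(2) by (auto intro!: tendsto_intros simp: o_def)
      then have e2: "eventually (\<lambda>k. c - c2 < q ((s \<circ> r) k)) sequentially"
        using c2(1) by (intro order_tendstoD(1)) auto
      from e1 e2 show ?thesis
      proof eventually_elim
        case (elim k)
        then show ?case using not_minf[of "s (r k)"] unfolding h_def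
          by (cases "\<phi> (s (r k))") auto
      qed
    qed
    from ev1 ev2 have "eventually (\<lambda>k. False) sequentially"
      by eventually_elim auto
    then show False by simp
  qed
  then have "\<forall>y'. h l \<le> h y'" unfolding m_def by (meson INF_lower UNIV_I order_trans)
  then have "\<forall>y'. \<phi> l + ereal (norm (z - l)^2 / (2 * lam)) \<le> \<phi> y' + ereal (norm (z - y')^2 / (2 * lam))"
    unfolding h_def q_def .
  then show ?thesis by (rule exI)
qed

lemma min_char:
  assumes lam: "lam > 0"
    and min: "\<And>y'. \<phi> p + ereal (norm (z - p)^2 / (2 * lam)) \<le> \<phi> y' + ereal (norm (z - y')^2 / (2 * lam))"
  shows "\<phi> p < \<infinity>" "\<And>y. \<phi> p + ereal (inner (z - p) (y - p) / lam) \<le> \<phi> y"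
proof -
  obtain y0 where y0: "\<phi> y0 < \<infinity>" using proper unfolding proper_fun_def by blast
  have "\<phi> p + ereal (norm (z - p)^2 / (2 * lam)) < \<infinity>"
  proof -
    have "\<phi> y0 + ereal (norm (z - y0)^2 / (2 * lam)) < \<infinity>" using y0 not_minf[of y0] by (cases "\<phi> y0") auto
    then show ?thesis using min[of y0] by (rule le_less_trans[rotated])
  qed
  then show fin: "\<phi> p < \<infinity>" using not_minf[of p] by (cases "\<phi> p") auto
  then obtain pp where pp: "\<phi> p = ereal pp" using not_minf[of p] by (cases "\<phi> p") auto
  fix y
  show "\<phi> p + ereal (inner (z - p) (y - p) / lam) \<le> \<phi> y"
  proof (cases "\<phi> y")
    case PInf then show ?thesis by simp
  next
    case MInf then show ?thesis using not_minf by simp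
  next
    case (real py)
    define v where "v = z - p"
    define u where "u = y - p"
    have "pp - py \<le> - (inner v u / lam) + t * (norm u ^ 2 / (2 * lam))" if t: "0 < t" "t < 1" for t
    proof -
      define w where "w = (1 - t) *\<^sub>R p + t *\<^sub>R y"
      have "\<phi> w \<le> ereal (1 - t) * \<phi> p + ereal t * \<phi> y"
        using conv t unfolding ereal_convex_def w_def by blast
      then have w1: "\<phi> w \<le> ereal ((1 - t) * pp + t * py)" using pp real by simp
      then obtain pw where pw: "\<phi> w = ereal pw" "pw \<le> (1 - t) * pp + t * py"
        using not_minf[of w] by (cases "\<phi> w") auto
      have "ereal (pp + norm (z - p)^2 / (2 * lam)) \<le> ereal (pw + norm (z - w)^2 / (2 * lam))"
        using min[of w] pp pw by simp
      then have m1: "pp + norm v^2 / (2 * lam) \<le> (1 - t) * pp + t * py + norm (z - w)^2 / (2 * lam)"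
        using pw(2) unfolding v_def by simp
      have "z - w = v - t *\<^sub>R u" unfolding w_def v_def u_def by (simp add: algebra_simps)
      then have n1: "norm (z - w)^2 = norm v ^2 - 2 * t * inner v u + t^2 * norm u^2"
      proof -
        have "norm (v - t *\<^sub>R u)^2 = inner (v - t *\<^sub>R u) (v - t *\<^sub>R u)" by (simp add: power2_norm_eq_inner)
        also have "\<dots> = inner v v - 2 * t * inner v u + t^2 * inner u u"
          by (simp add: inner_diff_left inner_diff_right inner_commute[of u v] power2_eq_square algebra_simps)
        finally show ?thesis using \<open>z - w = v - t *\<^sub>R u\<close> by (simp add: power2_norm_eq_inner)
      qed
      have n2: "(norm v ^2 - 2 * t * inner v u + t^2 * norm u^2) / (2 * lam)
          = norm v^2 / (2 * lam) + t * (- (inner v u / lam) + t * (norm u ^ 2 / (2 * lam)))"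
        using lam by (simp add: field_simps power2_eq_square)
      have e: "norm (z - w)^2 / (2 * lam) = norm v^2 / (2 * lam) + t * (- (inner v u / lam) + t * (norm u ^ 2 / (2 * lam)))"
        unfolding n1 by (rule n2)
      have c1: "(1 - t) * pp + t * py = pp - t * (pp - py)" by (simp add: algebra_simps)
      have m2: "pp + norm v^2 / (2 * lam) \<le> pp - t * (pp - py) + norm (z - w)^2 / (2 * lam)"
        using m1 unfolding c1 .
      have lin: "\<And>a V X N Y :: real. a + V \<le> a - X + N \<Longrightarrow> N = V + Y \<Longrightarrow> X \<le> Y" by linarith
      have "t * (pp - py) \<le> t * (- (inner v u / lam) + t * (norm u ^ 2 / (2 * lam)))"
        by (rule lin[OF m2 e])
      then show ?thesis using t(1) by (rule mult_left_le_imp_le)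
    qed
    note key = this
    have c0: "norm u^2 / (2 * lam) \<ge> 0" using lam by simp
    have "pp - py \<le> - (inner v u / lam)"
      by (rule small_t_limit[OF c0 key])
    then have "pp + inner (z - p) (y - p) / lam \<le> py" unfolding v_def u_def by linarith
    then show ?thesis by (simp only: pp real plus_ereal.simps ereal_less_eq)
  qed
qed

lemma prox_props:
  assumes lam: "lam > 0"
  shows "\<phi> (prox lam \<phi> z) < \<infinity>"
    "\<And>y. \<phi> (prox lam \<phi> z) + ereal (inner (z - prox lam \<phi> z) (y - prox lam \<phi> z) / lam) \<le> \<phi> y"
proof -
  define P where "P y \<longleftrightarrow> (\<forall>y'. \<phi> y + ereal (norm (z - y)^2 / (2 * lam)) \<le> \<phi> y' + ereal (norm (z - y')^2 / (2 * lam)))" for y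
  obtain p where p: "P p" using prox_exists[OF lam, of z] unfolding P_def by blast
  have uniq: "y = p" if "P y" for y
  proof -
    have py: "\<phi> p < \<infinity>" "\<phi> y < \<infinity>"
      using min_char(1)[OF lam, of p z] min_char(1)[OF lam, of y z] p that unfolding P_def by blast+
    obtain a where a: "\<phi> p = ereal a" using py(1) not_minf[of p] by (cases "\<phi> p") auto
    obtain b where b: "\<phi> y = ereal b" using py(2) not_minf[of y] by (cases "\<phi> y") auto
    have "\<phi> p + ereal (inner (z - p) (y - p) / lam) \<le> \<phi> y"
      using min_char(2)[OF lam, of p z] p unfolding P_def by blast
    then have 1: "a + inner (z - p) (y - p) / lam \<le> b" using a b by simp
    have "\<phi> y + ereal (inner (z - y) (p - y) / lam) \<le> \<phi> p"
      using min_char(2)[OF lam, of y z] that unfolding P_def by blast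
    then have 2: "b + inner (z - y) (p - y) / lam \<le> a" using a b by simp
    from 1 2 have "inner (z - p) (y - p) / lam + inner (z - y) (p - y) / lam \<le> 0" by linarith
    then have "(inner (z - p) (y - p) + inner (z - y) (p - y)) / lam \<le> 0" by (simp add: add_divide_distrib)
    then have "inner (z - p) (y - p) + inner (z - y) (p - y) \<le> 0"
      using lam by (simp add: divide_le_0_iff)
    moreover have "inner (z - p) (y - p) + inner (z - y) (p - y) = inner (y - p) (y - p)"
      by (simp add: inner_diff_left inner_diff_right inner_commute)
    ultimately have "inner (y - p) (y - p) \<le> 0" by simp
    then have "inner (y - p) (y - p) = 0" using inner_ge_zero[of "y - p"] by linarith
    then show ?thesis by simp
  qed
  have "(THE y. P y) = p" by (rule the_equality) (use p uniq in blast)+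
  moreover have "prox lam \<phi> z = (THE y. P y)" unfolding prox_def P_def by simp
  ultimately have pe: "prox lam \<phi> z = p" by simp
  have p': "\<And>y'. \<phi> p + ereal (norm (z - p)^2 / (2 * lam)) \<le> \<phi> y' + ereal (norm (z - y')^2 / (2 * lam))"
    using p unfolding P_def by blast
  show "\<phi> (prox lam \<phi> z) < \<infinity>" unfolding pe by (rule min_char(1)[OF lam p'])
  show "\<And>y. \<phi> (prox lam \<phi> z) + ereal (inner (z - prox lam \<phi> z) (y - prox lam \<phi> z) / lam) \<le> \<phi> y"
    unfolding pe by (rule min_char(2)[OF lam p'])
qed

lemma edom_segment:
  assumes "\<phi> a < \<infinity>" "\<phi> b < \<infinity>"
  shows "closed_segment a b \<subseteq> edom \<phi>"
proof
  fix p assume "p \<in> closed_segment a b"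
  then obtain u where u: "0 \<le> u" "u \<le> 1" "p = (1 - u) *\<^sub>R a + u *\<^sub>R b" unfolding in_segment by blast
  obtain pa where pa: "\<phi> a = ereal pa" using assms(1) not_minf[of a] by (cases "\<phi> a") auto
  obtain pb where pb: "\<phi> b = ereal pb" using assms(2) not_minf[of b] by (cases "\<phi> b") auto
  show "p \<in> edom \<phi>"
  proof (cases "u = 0 \<or> u = 1")
    case True then show ?thesis using u assms unfolding edom_def by auto
  next
    case False
    then have "0 < u" "u < 1" using u by auto
    then have "\<phi> p \<le> ereal (1 - u) * \<phi> a + ereal u * \<phi> b"
      using conv unfolding ereal_convex_def u(3) by blast
    also have "\<dots> = ereal ((1 - u) * pa + u * pb)" using pa pb by simp
    finally have "\<phi> p < \<infinity>" using le_less_trans by fastforce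
    then show ?thesis unfolding edom_def by simp
  qed
qed

end


lemma seg_pt: "t \<in> {0..1} \<Longrightarrow> a + t *\<^sub>R (b - a) \<in> closed_segment a b"
  unfolding in_segment by (rule exI[of _ t]) (auto simp: algebra_simps)

lemma lip_local:
  fixes G :: "'a::real_normed_vector \<Rightarrow> 'b::real_normed_vector"
  assumes "lip G p < ereal K"
  shows "\<exists>\<delta>>0. \<forall>u\<in>ball p \<delta>. \<forall>v\<in>ball p \<delta>. norm (G u - G v) \<le> K * norm (u - v)"
proof -
  have "eventually (\<lambda>q. ereal (norm (G (fst q) - G (snd q)) / norm (fst q - snd q)) < ereal K)
          (at (p, p) within {q. fst q \<noteq> snd q})"
    using assms unfolding lip_def by (rule Limsup_lessD)
  then obtain d where d: "d > 0" "\<And>q. q \<in> {q. fst q \<noteq> snd q} \<Longrightarrow> q \<noteq> (p, p) \<Longrightarrow> dist q (p, p) < d \<Longrightarrow>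
      norm (G (fst q) - G (snd q)) / norm (fst q - snd q) < K"
    unfolding eventually_at by auto
  show ?thesis
  proof (intro exI[of _ "d / 2"] conjI ballI)
    show "d / 2 > 0" using d by simp
    fix u v assume uv: "u \<in> ball p (d / 2)" "v \<in> ball p (d / 2)"
    show "norm (G u - G v) \<le> K * norm (u - v)"
    proof (cases "u = v")
      case False
      have "dist (u, v) (p, p) \<le> dist u p + dist v p"
        unfolding dist_Pair_Pair using sqrt_sum_squares_le_sum_abs[of "dist u p" "dist v p"] by simp
      also have "\<dots> < d" using uv by (simp add: dist_commute)
      finally have "norm (G u - G v) / norm (u - v) < K"
        using d(2)[of "(u, v)"] False by auto
      then show ?thesis using False by (simp add: divide_less_eq less_imp_le)
    qed simp
  qed
qed

lemma uniform_lip_segment: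
  fixes G :: "'a::euclidean_space \<Rightarrow> 'b::real_normed_vector"
  assumes "\<And>p. p \<in> closed_segment a b \<Longrightarrow> lip G p < ereal K"
  obtains e where "e > 0" "\<And>u v. u \<in> closed_segment a b \<Longrightarrow> v \<in> closed_segment a b \<Longrightarrow> norm (u - v) < e \<Longrightarrow>
      norm (G u - G v) \<le> K * norm (u - v)"
proof -
  have "\<forall>p\<in>closed_segment a b. \<exists>\<delta>. \<delta> > 0 \<and> (\<forall>u\<in>ball p \<delta>. \<forall>v\<in>ball p \<delta>. norm (G u - G v) \<le> K * norm (u - v))"
  proof
    fix p assume "p \<in> closed_segment a b"
    from lip_local[OF assms[OF this]] show "\<exists>\<delta>. \<delta> > 0 \<and> (\<forall>u\<in>ball p \<delta>. \<forall>v\<in>ball p \<delta>. norm (G u - G v) \<le> K * norm (u - v))"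
      by simp
  qed
  then obtain \<delta> where d: "\<forall>p\<in>closed_segment a b. \<delta> p > 0 \<and> (\<forall>u\<in>ball p (\<delta> p). \<forall>v\<in>ball p (\<delta> p). norm (G u - G v) \<le> K * norm (u - v))"
    by (rule bchoice[THEN exE])
  have cov: "closed_segment a b \<subseteq> \<Union>((\<lambda>p. ball p (\<delta> p)) ` closed_segment a b)"
  proof
    fix x assume "x \<in> closed_segment a b"
    then have "x \<in> ball x (\<delta> x)" using d by simp
    then show "x \<in> \<Union>((\<lambda>p. ball p (\<delta> p)) ` closed_segment a b)" using \<open>x \<in> closed_segment a b\<close> by blast
  qed
  have opn: "\<And>B. B \<in> (\<lambda>p. ball p (\<delta> p)) ` closed_segment a b \<Longrightarrow> open B" by auto
  obtain e where e: "0 < e" "\<And>x. x \<in> closed_segment a b \<Longrightarrow> \<exists>B \<in> (\<lambda>p. ball p (\<delta> p)) ` closed_segment a b. ball x e \<subseteq> B"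
    using Heine_Borel_lemma[OF compact_segment cov opn] by blast
  show ?thesis
  proof (rule that[OF e(1)])
    fix u v assume uv: "u \<in> closed_segment a b" "v \<in> closed_segment a b" "norm (u - v) < e"
    obtain p where p: "p \<in> closed_segment a b" "ball u e \<subseteq> ball p (\<delta> p)" using e(2)[OF uv(1)] by blast
    have "u \<in> ball u e" using e(1) by simp
    have "v \<in> ball u e" using uv(3) by (simp add: dist_norm)
    have "u \<in> ball p (\<delta> p)" using p(2) \<open>u \<in> ball u e\<close> by (rule subsetD)
    have "v \<in> ball p (\<delta> p)" using p(2) \<open>v \<in> ball u e\<close> by (rule subsetD)
    note this \<open>u \<in> ball p (\<delta> p)\<close>
    then show "norm (G u - G v) \<le> K * norm (u - v)" using d p(1) by blast
  qed
qed

lemma chain_bound: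
  fixes G :: "'a::real_normed_vector \<Rightarrow> 'b::real_normed_vector"
  assumes e: "e > 0"
    and loc: "\<And>u v. u \<in> closed_segment a b \<Longrightarrow> v \<in> closed_segment a b \<Longrightarrow> norm (u - v) < e \<Longrightarrow>
      norm (G u - G v) \<le> K * norm (u - v)"
  shows "t \<in> {0..1} \<Longrightarrow> norm (G (a + t *\<^sub>R (b - a)) - G a) \<le> K * t * norm (b - a)"
proof -
  define d where "d = norm (b - a)"
  have P: "\<forall>t\<in>{0..1}. t * d \<le> real n * e / 2 \<longrightarrow> norm (G (a + t *\<^sub>R (b - a)) - G a) \<le> K * t * d" for n
  proof (induction n)
    case 0
    show ?case
    proof (intro ballI impI)
      fix t :: real assume t: "t \<in> {0..1}" "t * d \<le> real 0 * e / 2"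
      have "d \<ge> 0" by (simp add: d_def)
      have "0 \<le> t * d" using t \<open>d \<ge> 0\<close> by simp
      then have "t * d = 0" using t(2) by simp
      then have "t = 0 \<or> d = 0" by (simp only: mult_eq_0_iff)
      then have "a + t *\<^sub>R (b - a) = a" by (auto simp: d_def)
      then have "G (a + t *\<^sub>R (b - a)) = G a" by (rule arg_cong)
      then have "norm (G (a + t *\<^sub>R (b - a)) - G a) = 0" by simp
      moreover have "K * t * d = 0" using \<open>t * d = 0\<close> by (simp add: mult.assoc)
      ultimately show "norm (G (a + t *\<^sub>R (b - a)) - G a) \<le> K * t * d" by linarith
    qed
  next
    case (Suc n)
    show ?case
    proof (intro ballI impI)
      fix t :: real assume t: "t \<in> {0..1}" "t * d \<le> real (Suc n) * e / 2"
      show "norm (G (a + t *\<^sub>R (b - a)) - G a) \<le> K * t * d"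
      proof (cases "t * d \<le> real n * e / 2")
        case True then show ?thesis using Suc.IH t(1) by blast
      next
        case False
        then have dpos: "d > 0" using e t(1) by (cases "d = 0") (auto simp: d_def)
        define s where "s = max 0 (t - e / (2 * d))"
        have "e / (2 * d) > 0" using e dpos by simp
        then have "s \<le> t" using t(1) by (auto simp: s_def)
        then have s01: "s \<in> {0..1}" using t(1) by (auto simp: s_def)
        have "s * d \<le> real n * e / 2"
        proof (cases "t - e / (2 * d) \<le> 0")
          case True
          have "0 \<le> real n * e / 2" using e by simp
          then show ?thesis using True by (simp add: s_def)
        next
          case False
          then have "s * d = t * d - e / 2" using dpos by (simp add: s_def field_simps)
          then show ?thesis using t(2) by (simp add: field_simps)
        qed
        then have IH: "norm (G (a + s *\<^sub>R (b - a)) - G a) \<le> K * s * d" using Suc.IH s01 by blast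
        have "(t - s) * d \<le> e / 2"
        proof -
          have "t - s \<le> e / (2 * d)" by (simp add: s_def)
          then have "(t - s) * d \<le> e / (2 * d) * d" using dpos by (intro mult_right_mono) auto
          also have "e / (2 * d) * d = e / 2" using dpos by simp
          finally show ?thesis .
        qed
        have nd: "norm ((a + t *\<^sub>R (b - a)) - (a + s *\<^sub>R (b - a))) = (t - s) * d"
        proof -
          have "(a + t *\<^sub>R (b - a)) - (a + s *\<^sub>R (b - a)) = (t - s) *\<^sub>R (b - a)" by (simp add: algebra_simps)
          then show ?thesis using \<open>s \<le> t\<close> by (simp add: d_def)
        qed
        have "norm (G (a + t *\<^sub>R (b - a)) - G (a + s *\<^sub>R (b - a))) \<le> K * ((t - s) * d)"
          using loc[OF seg_pt[OF t(1)] seg_pt[OF s01]] nd \<open>(t - s) * d \<le> e / 2\<close> e by simp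
        then have "norm (G (a + t *\<^sub>R (b - a)) - G a) \<le> K * ((t - s) * d) + K * s * d"
          using IH norm_triangle_le[of "G (a + t *\<^sub>R (b - a)) - G (a + s *\<^sub>R (b - a))" "G (a + s *\<^sub>R (b - a)) - G a"]
          by simp
        also have "\<dots> = K * t * d" by (simp add: algebra_simps)
        finally show ?thesis .
      qed
    qed
  qed
  assume t: "t \<in> {0..1}"
  obtain n :: nat where n: "2 * d / e \<le> real n" using real_arch_simple by blast
  have "t * d \<le> d" using t by (auto simp: d_def mult_left_le_one_le)
  also have "d \<le> real n * e / 2" using n e by (simp add: field_simps)
  finally show ?thesis using P[of n] t unfolding d_def by blast
qed

lemma descent:
  fixes f :: "'a::euclidean_space \<Rightarrow> real" and gf :: "'a \<Rightarrow> 'a"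
  assumes seg: "closed_segment a b \<subseteq> U" and der: "\<forall>y\<in>U. GDERIV f y :> gf y"
    and bnd: "\<And>t. t \<in> {0..1} \<Longrightarrow> norm (gf (a + t *\<^sub>R (b - a)) - gf a) \<le> K * t * norm (b - a)"
  shows "f b - f a - inner (gf a) (b - a) \<le> K / 2 * norm (b - a)^2"
proof -
  define d where "d = b - a"
  define g where "g t = f (a + t *\<^sub>R d) - t * inner (gf a) d - K / 2 * t^2 * norm d^2" for t
  have D: "\<exists>y. (g has_real_derivative y) (at t) \<and> y \<le> 0" if t: "0 \<le> t" "t \<le> 1" for t
  proof -
    have tt: "t \<in> {0..1}" using t by simp
    have inU: "a + t *\<^sub>R d \<in> U" using seg seg_pt[OF tt] unfolding d_def by blast
    have GD: "(f has_derivative (\<lambda>h. inner h (gf (a + t *\<^sub>R d)))) (at (a + t *\<^sub>R d))"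
      using der inU unfolding gderiv_def by blast
    have h1: "((\<lambda>t. a + t *\<^sub>R d) has_derivative (\<lambda>h. h *\<^sub>R d)) (at t)"
      by (auto intro!: derivative_eq_intros)
    have h2: "((\<lambda>t. f (a + t *\<^sub>R d)) has_derivative (\<lambda>h. inner (h *\<^sub>R d) (gf (a + t *\<^sub>R d)))) (at t)"
      using has_derivative_compose[OF h1 GD] .
    have h3: "((\<lambda>t. f (a + t *\<^sub>R d)) has_real_derivative inner d (gf (a + t *\<^sub>R d))) (at t)"
    proof -
      have "(\<lambda>h. inner (h *\<^sub>R d) (gf (a + t *\<^sub>R d))) = (*) (inner d (gf (a + t *\<^sub>R d)))"
        by (simp add: fun_eq_iff)
      then show ?thesis unfolding has_field_derivative_def using h2 by simp
    qed
    have h4: "(g has_real_derivative (inner d (gf (a + t *\<^sub>R d)) - inner (gf a) d - K * t * norm d^2)) (at t)"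
      unfolding g_def by (auto intro!: derivative_eq_intros h3 simp: power2_eq_square)
    have "inner d (gf (a + t *\<^sub>R d)) - inner (gf a) d = inner (gf (a + t *\<^sub>R d) - gf a) d"
      by (metis inner_commute inner_diff_right)
    also have "\<dots> \<le> norm (gf (a + t *\<^sub>R d) - gf a) * norm d" by (rule norm_cauchy_schwarz)
    also have "\<dots> \<le> (K * t * norm d) * norm d" using bnd[OF tt] unfolding d_def by (intro mult_right_mono) auto
    also have "\<dots> = K * t * norm d^2" by (simp add: power2_eq_square)
    finally have "inner d (gf (a + t *\<^sub>R d)) - inner (gf a) d - K * t * norm d^2 \<le> 0" by simp
    with h4 show ?thesis by blast
  qed
  have "g 1 \<le> g 0" by (rule DERIV_nonpos_imp_nonincreasing[of 0 1 g]) (use D in auto)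
  then show ?thesis unfolding g_def d_def by simp
qed



lemma eps_lim:
  fixes X L' D :: real
  assumes D: "D \<ge> 0" and H: "\<And>K. K > L' \<Longrightarrow> X \<le> K / 2 * D"
  shows "X \<le> L' / 2 * D"
proof (rule ccontr)
  assume "\<not> X \<le> L' / 2 * D"
  then have gap: "X - L' / 2 * D > 0" by simp
  show False
  proof (cases "D = 0")
    case True then show False using H[of "L' + 1"] gap by simp
  next
    case False
    then have Dp: "D > 0" using D by simp
    define K where "K = L' + (X - L' / 2 * D) / D"
    have "K > L'" using gap Dp by (simp add: K_def)
    have "K / 2 * D = L' / 2 * D + (X - L' / 2 * D) / 2" using Dp by (simp add: K_def field_simps)
    also have "\<dots> < X" using gap by (simp add: field_simps)
    finally show False using H[OF \<open>K > L'\<close>] by simp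
  qed
qed

theorem lemma2p8:
  fixes \<phi> :: "'a::euclidean_space \<Rightarrow> ereal"
    and f :: "'a \<Rightarrow> real" and gf :: "'a \<Rightarrow> 'a"
    and M :: "'w measure" and F :: "nat \<Rightarrow> 'w measure"
    and lam :: real and \<alpha> :: "nat \<Rightarrow> real" and z0 :: 'a
    and g :: "nat \<Rightarrow> 'w \<Rightarrow> 'a" and z x :: "nat \<Rightarrow> 'w \<Rightarrow> 'a"
    and L :: "'w \<Rightarrow> ereal"
  assumes conv: "ereal_convex \<phi>" and lsc: "lsc_fun \<phi>" and proper: "proper_fun \<phi>"
    and U: "\<exists>U. open U \<and> edom \<phi> \<subseteq> U \<and> (\<forall>y\<in>U. GDERIV f y :> gf y) \<and> continuous_on U gf"
    and Mprob: "prob_space M"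
    and filt: "\<And>k. subalgebra M (F k)" "\<And>i j. i \<le> j \<Longrightarrow> sets (F i) \<subseteq> sets (F j)"
    and lam: "lam > 0" and alpha: "\<And>k. \<alpha> k > 0"
    and g_meas: "\<And>k. g k \<in> borel_measurable (F (Suc k))"
    and z0: "\<And>\<omega>. z 0 \<omega> = z0"
    and zrec: "\<And>k \<omega>. z (Suc k) \<omega> = z k \<omega> - \<alpha> k *\<^sub>R (g k \<omega> + grad_env lam \<phi> (z k \<omega>))"
    and xdef: "\<And>k \<omega>. x k \<omega> = prox lam \<phi> (z k \<omega>)"
    and Ldef: "\<And>\<omega>. L \<omega> = (SUP xb \<in> closure (convex hull (range (\<lambda>k. x k \<omega>))). lip gf xb)"
  shows "\<forall>\<omega>\<in>space M. \<forall>m n. m < n \<longrightarrow>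
     L \<omega> = \<infinity> \<or>
     (ereal (f (x n \<omega>)) + \<phi> (x n \<omega>)) - (ereal (f (x m \<omega>)) + \<phi> (x m \<omega>))
       \<le> ereal ((real_of_ereal (L \<omega>) / 2 - 1 / lam) * norm (x n \<omega> - x m \<omega>)^2
                + inner (F_nor lam gf \<phi> (z m \<omega>)) (x n \<omega> - x m \<omega>)
                + (1 / lam) * inner (z n \<omega> - z m \<omega>) (x n \<omega> - x m \<omega>))"
proof (intro ballI allI impI)
  fix \<omega> and m n :: nat
  assume "\<omega> \<in> space M" "m < n"
  show "L \<omega> = \<infinity> \<or>
     (ereal (f (x n \<omega>)) + \<phi> (x n \<omega>)) - (ereal (f (x m \<omega>)) + \<phi> (x m \<omega>))
       \<le> ereal ((real_of_ereal (L \<omega>) / 2 - 1 / lam) * norm (x n \<omega> - x m \<omega>)^2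
                + inner (F_nor lam gf \<phi> (z m \<omega>)) (x n \<omega> - x m \<omega>)
                + (1 / lam) * inner (z n \<omega> - z m \<omega>) (x n \<omega> - x m \<omega>))"
  proof (cases "L \<omega> = \<infinity>")
    case True then show ?thesis by simp
  next
    case Lfin: False
    define a where "a = x m \<omega>"
    define b where "b = x n \<omega>"
    define zm where "zm = z m \<omega>"
    define zn where "zn = z n \<omega>"
    define L' where "L' = real_of_ereal (L \<omega>)"
    define d where "d = b - a"
    have a_eq: "prox lam \<phi> zm = a" unfolding a_def zm_def xdef ..
    have b_eq: "prox lam \<phi> zn = b" unfolding b_def zn_def xdef ..
    have fa: "\<phi> a < \<infinity>" using prox_props(1)[OF conv lsc proper lam, of zm] a_eq by simp
    have fb: "\<phi> b < \<infinity>" using prox_props(1)[OF conv lsc proper lam, of zn] b_eq by simp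
    have not_minf: "\<And>y. \<phi> y \<noteq> -\<infinity>" using proper unfolding proper_fun_def by auto
    obtain pa where pa: "\<phi> a = ereal pa" using fa not_minf[of a] by (cases "\<phi> a") auto
    obtain pb where pb: "\<phi> b = ereal pb" using fb not_minf[of b] by (cases "\<phi> b") auto
    have sub: "\<phi> b + ereal (inner (zn - b) (a - b) / lam) \<le> \<phi> a"
      using prox_props(2)[OF conv lsc proper lam, of zn a] b_eq by simp
    then have sub': "pb + inner (zn - b) (a - b) / lam \<le> pa" using pa pb by simp
    obtain Uo where Uo: "open Uo" "edom \<phi> \<subseteq> Uo" "\<forall>y\<in>Uo. GDERIV f y :> gf y" using U by blast
    have segU: "closed_segment a b \<subseteq> Uo"
      using edom_segment[OF conv lsc proper fa fb] Uo(2) by blast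
    have segC: "closed_segment a b \<subseteq> closure (convex hull (range (\<lambda>k. x k \<omega>)))"
    proof -
      have "closed_segment a b = convex hull {a, b}" by (rule segment_convex_hull)
      also have "\<dots> \<subseteq> convex hull (range (\<lambda>k. x k \<omega>))"
        by (rule hull_mono) (auto simp: a_def b_def)
      also have "\<dots> \<subseteq> closure (convex hull (range (\<lambda>k. x k \<omega>)))" by (rule closure_subset)
      finally show ?thesis .
    qed
    have lipL: "lip gf p \<le> L \<omega>" if "p \<in> closed_segment a b" for p
      unfolding Ldef using segC that by (intro SUP_upper) blast
    have desc: "f b - f a - inner (gf a) (b - a) \<le> K / 2 * norm (b - a)^2" if K: "K > L'" for K
    proof -
      have "lip gf p < ereal K" if "p \<in> closed_segment a b" for p
      proof -
        have "L \<omega> < ereal K" using Lfin K unfolding L'_def by (cases "L \<omega>") auto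
        then show ?thesis using lipL[OF that] by (rule le_less_trans[rotated])
      qed
      then obtain e where e: "e > 0" "\<And>u v. u \<in> closed_segment a b \<Longrightarrow> v \<in> closed_segment a b \<Longrightarrow> norm (u - v) < e \<Longrightarrow>
          norm (gf u - gf v) \<le> K * norm (u - v)"
        using uniform_lip_segment by blast
      have bnd: "\<And>t. t \<in> {0..1} \<Longrightarrow> norm (gf (a + t *\<^sub>R (b - a)) - gf a) \<le> K * t * norm (b - a)"
        using chain_bound[OF e] by blast
      show ?thesis by (rule descent[OF segU Uo(3) bnd])
    qed
    have dsc: "f b - f a - inner (gf a) (b - a) \<le> L' / 2 * norm (b - a)^2"
      by (rule eps_lim[OF _ desc]) simp
    have Fn: "F_nor lam gf \<phi> zm = gf a + (1 / lam) *\<^sub>R (zm - a)"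
      unfolding F_nor_def a_eq ..
    have vec: "zn - b = (zn - zm) + (zm - a) - d" by (simp add: d_def algebra_simps)
    have i1: "inner (zn - b) d = inner (zn - zm) d + inner (zm - a) d - inner d d"
      unfolding vec by (simp add: inner_add_left inner_diff_left)
    have i2: "inner (zn - b) (a - b) = - inner (zn - b) d"
      by (simp add: d_def inner_diff_right)
    have nd: "norm d ^ 2 = inner d d" by (simp add: power2_norm_eq_inner)
    have RHS: "(L' / 2 - 1 / lam) * norm d ^ 2 + inner (gf a + (1 / lam) *\<^sub>R (zm - a)) d
          + (1 / lam) * inner (zn - zm) d
        = L' / 2 * norm d ^ 2 + inner (gf a) d + inner (zn - b) d / lam"
    proof -
      have i3: "inner (gf a + (1 / lam) *\<^sub>R (zm - a)) d = inner (gf a) d + inner (zm - a) d / lam"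
        unfolding inner_add_left inner_scaleR_left by simp
      show ?thesis unfolding i1 nd i3 using lam by (simp add: field_simps)
    qed
    have real_ineq: "f b + pb - (f a + pa) \<le> (L' / 2 - 1 / lam) * norm d ^ 2
        + inner (gf a + (1 / lam) *\<^sub>R (zm - a)) d + (1 / lam) * inner (zn - zm) d"
      unfolding RHS using dsc sub' i2 unfolding d_def by (simp add: field_simps)
    have "(ereal (f b) + \<phi> b) - (ereal (f a) + \<phi> a) = ereal (f b + pb - (f a + pa))"
      using pa pb by simp
    also have "\<dots> \<le> ereal ((L' / 2 - 1 / lam) * norm d ^ 2
        + inner (F_nor lam gf \<phi> zm) d + (1 / lam) * inner (zn - zm) d)"
      unfolding Fn using real_ineq by simp
    finally show ?thesis unfolding a_def b_def zm_def zn_def L'_def d_def by simp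
  qed
qed

end
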